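(* The winding number is the unique invariant of a bounded open interval of $\widetilde{\mathbb{RP}}^1=\mathbb R$ under the action of $\widetilde{SL}(2,\mathbb R)$: for bounded open intervals $U,U'\subset\mathbb R$, there exists $\tilde A\in\widetilde{SL}(2,\mathbb R)$ with $\tilde A(U)=U'$ if and only if $W(U)=W(U')$.
   Context: Let $\pi:\mathbb R\to\mathbb{RP}^1$, $\pi(t)=[\cos t:\sin t]$, and $\bar\pi(t)=(\cos t,\sin t)\in S^1$. $SL(2,\mathbb R)$ acts on $S^1$ by $A\cdot v=Av/\|Av\|$. The universal cover $\widetilde{SL}(2,\mathbb R)$ is realized as the group of diffeomorphisms $\tilde A$ of $\mathbb R$ for which there exists $A\in SL(2,\mathbb R)$ with $\bar\pi\circ\tilde A=A\cdot\bar\pi$ (lifts of homographies of $\mathbb{RP}^1$). Winding number: for real numbers $a<b$, $W((a,b))=k$ if $b=a+k\pi$ with $k\in\mathbb N$, and $W((a,b))=k+\frac12$ if $a+k\pi<b<a+(k+1)\pi$ with $k\in\mathbb N=\{0,1,2,\dots\}$. *)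

theory Defs
  imports "HOL-Analysis.Analysis"
begin

definition SL2 :: "(real^2^2) set" where
  "SL2 = {A. det A = 1}"

definition pibar :: "real \<Rightarrow> real^2" where
  "pibar t = vector [cos t, sin t]"

definition sl_act :: "real^2^2 \<Rightarrow> real^2 \<Rightarrow> real^2" where
  "sl_act A v = (1 / norm (A *v v)) *\<^sub>R (A *v v)"

definition smooth_real :: "(real \<Rightarrow> real) \<Rightarrow> bool" where
  "smooth_real f \<longleftrightarrow> (\<forall>n x. ((deriv ^^ n) f) differentiable (at x))"

definition diffeo_real :: "(real \<Rightarrow> real) \<Rightarrow> bool" where
  "diffeo_real f \<longleftrightarrow> bij f \<and> smooth_real f \<and> smooth_real (inv f)"

text \<open>The universal cover of SL(2,R), realised as lifts of homographies.\<close>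
definition SL2_tilde :: "(real \<Rightarrow> real) set" where
  "SL2_tilde = {F. diffeo_real F \<and> (\<exists>A\<in>SL2. pibar \<circ> F = sl_act A \<circ> pibar)}"

definition winding :: "real \<Rightarrow> real \<Rightarrow> real" where
  "winding a b = (THE w.
     (\<exists>k::nat. b = a + real k * pi \<and> w = real k) \<or>
     (\<exists>k::nat. a + real k * pi < b \<and> b < a + (real k + 1) * pi \<and> w = real k + 1/2))"

end

theory Submission
  imports Defs
begin

definition Cn :: "nat \<Rightarrow> (real \<Rightarrow> real) \<Rightarrow> bool" where
  "Cn n f \<longleftrightarrow> (\<forall>m\<le>n. \<forall>x. ((deriv ^^ m) f) differentiable (at x))"

lemma smooth_Cn: "smooth_real f \<longleftrightarrow> (\<forall>n. Cn n f)"
  unfolding smooth_real_def Cn_def by blast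

lemma Cn_0: "Cn 0 f \<longleftrightarrow> (\<forall>x. f differentiable (at x))"
  unfolding Cn_def by simp

lemma Cn_Suc: "Cn (Suc n) f \<longleftrightarrow> (\<forall>x. f differentiable (at x)) \<and> Cn n (deriv f)"
proof -
  have "(\<forall>m\<le>Suc n. P m) \<longleftrightarrow> P 0 \<and> (\<forall>m\<le>n. P (Suc m))" for P
    by (metis Suc_le_mono le0 not0_implies_Suc)
  moreover have "(deriv ^^ Suc m) f = (deriv ^^ m) (deriv f)" for m
    by (simp add: funpow_Suc_right del: funpow.simps)
  ultimately show ?thesis unfolding Cn_def by simp
qed

lemma Cn_SucD: "Cn (Suc n) f \<Longrightarrow> Cn n f"
  unfolding Cn_def by auto

lemma Cn_diff: "Cn n f \<Longrightarrow> f differentiable (at x)"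
  unfolding Cn_def by (metis funpow_0 le0)

lemma Cn_D: "Cn n f \<Longrightarrow> (f has_real_derivative deriv f x) (at x)"
  using Cn_diff DERIV_deriv_iff_real_differentiable by blast

lemma deriv_eqI: "(\<And>x. (f has_real_derivative f' x) (at x)) \<Longrightarrow> deriv f = f'"
  by (rule ext) (simp add: DERIV_imp_deriv)

lemma Cn_SucI: "(\<And>x. (f has_real_derivative f' x) (at x)) \<Longrightarrow> Cn n f' \<Longrightarrow> Cn (Suc n) f"
  unfolding Cn_Suc using deriv_eqI[of f f'] real_differentiable_def by metis

lemma diffI: "(f has_real_derivative D) (at x) \<Longrightarrow> f differentiable (at x)"
  using real_differentiable_def by blast

lemma Cn_const: "Cn n (\<lambda>x. c)"
proof (induction n arbitrary: c)
  case 0 then show ?case by (simp add: Cn_0)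
next
  case (Suc n)
  show ?case
    using Suc by (intro Cn_SucI[of _ "\<lambda>x. 0"]) auto
qed

lemma Cn_id: "Cn n (\<lambda>x. x)"
  by (cases n) (auto simp: Cn_0 intro!: Cn_SucI[of _ "\<lambda>x. 1"] Cn_const derivative_eq_intros)

lemma Cn_add: "Cn n f \<Longrightarrow> Cn n g \<Longrightarrow> Cn n (\<lambda>x. f x + g x)"
proof (induction n arbitrary: f g)
  case 0 then show ?case by (auto simp: Cn_0)
next
  case (Suc n)
  have "Cn n (\<lambda>x. deriv f x + deriv g x)"
    using Suc by (intro Suc.IH) (auto simp: Cn_Suc)
  then show ?case
    by (intro Cn_SucI[of _ "\<lambda>x. deriv f x + deriv g x"])
       (use Suc in \<open>auto intro!: derivative_eq_intros Cn_D\<close>)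
qed

lemma Cn_mult: "Cn n f \<Longrightarrow> Cn n g \<Longrightarrow> Cn n (\<lambda>x. f x * g x)"
proof (induction n arbitrary: f g)
  case 0 then show ?case by (auto simp: Cn_0)
next
  case (Suc n)
  have "Cn n (\<lambda>x. deriv f x * g x + f x * deriv g x)"
    using Suc Cn_SucD[OF Suc.prems(1)] Cn_SucD[OF Suc.prems(2)] by (intro Cn_add Suc.IH) (auto simp: Cn_Suc)
  then show ?case
    by (intro Cn_SucI[of _ "\<lambda>x. deriv f x * g x + f x * deriv g x"])
       (use Suc in \<open>auto intro!: derivative_eq_intros Cn_D\<close>)
qed

lemma Cn_minus: "Cn n f \<Longrightarrow> Cn n (\<lambda>x. - f x)"
  using Cn_mult[OF Cn_const[of n "-1"]] by simp

lemma Cn_compose: "Cn n f \<Longrightarrow> Cn n g \<Longrightarrow> Cn n (\<lambda>x. g (f x))"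
proof (induction n arbitrary: f g)
  case 0
  have "(g \<circ> f) differentiable (at x)" for x
    by (rule differentiable_chain_at) (use 0 in \<open>simp_all add: Cn_0\<close>)
  then show ?case by (simp add: Cn_0 o_def)
next
  case (Suc n)
  have "Cn n (\<lambda>x. deriv g (f x))"
    using Suc Cn_SucD[OF Suc.prems(1)] by (intro Suc.IH[of f "deriv g"]) (auto simp: Cn_Suc)
  then have "Cn n (\<lambda>x. deriv g (f x) * deriv f x)"
    using Suc by (intro Cn_mult) (auto simp: Cn_Suc)
  moreover have "((\<lambda>x. g (f x)) has_real_derivative deriv g (f x) * deriv f x) (at x)" for x
    using DERIV_chain2[OF Cn_D[OF Suc.prems(2)] Cn_D[OF Suc.prems(1)]] .
  ultimately show ?case
    by (intro Cn_SucI[of _ "\<lambda>x. deriv g (f x) * deriv f x"])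
qed

lemma Cn_inverse: "Cn n f \<Longrightarrow> (\<And>x. f x \<noteq> 0) \<Longrightarrow> Cn n (\<lambda>x. inverse (f x))"
proof (induction n arbitrary: f)
  case 0
  have "(\<lambda>x. inverse (f x)) differentiable (at x)" for x
    using 0 Cn_D[OF 0(1)] by (intro diffI) (auto intro!: derivative_eq_intros)
  then show ?case by (simp add: Cn_0)
next
  case (Suc n)
  have "Cn n (\<lambda>x. - (deriv f x * (inverse (f x) * inverse (f x))))"
    using Suc Cn_SucD[OF Suc.prems(1)] by (intro Cn_minus Cn_mult Suc.IH) (auto simp: Cn_Suc)
  then show ?case
    by (intro Cn_SucI[of _ "\<lambda>x. - (deriv f x * (inverse (f x) * inverse (f x)))"])
       (use Suc in \<open>auto intro!: derivative_eq_intros Cn_D simp: power2_eq_square\<close>)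
qed

lemma Cn_sin_cos: "Cn n sin \<and> Cn n cos"
proof (induction n)
  case 0 then show ?case by (auto simp: Cn_0 intro!: diffI derivative_eq_intros)
next
  case (Suc n)
  have "Cn (Suc n) sin"
    by (rule Cn_SucI[of _ cos]) (use Suc in \<open>auto intro!: derivative_eq_intros\<close>)
  moreover have "Cn (Suc n) cos"
    by (rule Cn_SucI[of _ "\<lambda>x. - sin x"]) (use Suc in \<open>auto intro!: derivative_eq_intros Cn_minus\<close>)
  ultimately show ?case ..
qed

lemma Cn_arctan: "Cn n arctan"
proof (cases n)
  case 0 then show ?thesis by (auto simp: Cn_0 intro!: diffI derivative_eq_intros)
next
  case (Suc m)
  have "Cn m (\<lambda>x. inverse (1 + x * x))"
  proof (intro Cn_inverse Cn_add Cn_mult Cn_const Cn_id)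
    fix x :: real show "1 + x * x \<noteq> 0" using zero_le_square[of x] by linarith
  qed
  then show ?thesis unfolding Suc
    by (intro Cn_SucI[of _ "\<lambda>x. inverse (1 + x * x)"]) (auto intro!: derivative_eq_intros simp: power2_eq_square)
qed

lemma vec2_eq: "(x::real^2) = y \<longleftrightarrow> x$1 = y$1 \<and> x$2 = y$2"
  by (auto simp: vec_eq_iff forall_2)

lemma norm_vec2: "norm (x::real^2) = sqrt ((x$1)\<^sup>2 + (x$2)\<^sup>2)"
  by (simp add: norm_vec_def L2_set_def sum_2)

lemma mv1: "((A::real^2^2) *v v)$1 = A$1$1 * v$1 + A$1$2 * v$2"
  by (simp add: matrix_vector_mult_def sum_2)
lemma mv2: "((A::real^2^2) *v v)$2 = A$2$1 * v$1 + A$2$2 * v$2"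
  by (simp add: matrix_vector_mult_def sum_2)

lemma pibar1 [simp]: "pibar t $ 1 = cos t" and pibar2 [simp]: "pibar t $ 2 = sin t"
  by (simp_all add: pibar_def)

lemma pibar_eq_iff: "pibar x = pibar y \<longleftrightarrow> (\<exists>n::int. x = y + 2 * pi * n)"
  using sin_cos_eq_iff[of x y] by (auto simp: vec2_eq)

lemma norm_pibar [simp]: "norm (pibar t) = 1"
  by (simp add: norm_vec2)

lemma pibar_pi: "pibar (t + pi) = - pibar t"
  by (simp add: vec2_eq)

lemma SL2_inj0:
  assumes "A \<in> SL2" "A *v v = 0" shows "v = (0::real^2)"
proof -
  have d: "A$1$1 * A$2$2 - A$1$2 * A$2$1 = 1" using assms(1) by (simp add: SL2_def det_2)
  have e1: "A$1$1 * v$1 + A$1$2 * v$2 = 0" and e2: "A$2$1 * v$1 + A$2$2 * v$2 = 0"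
    using assms(2) by (metis mv1 zero_index, metis mv2 zero_index)
  have "v$1 = (A$1$1 * A$2$2 - A$1$2 * A$2$1) * v$1" using d by simp
  also have "\<dots> = A$2$2 * (A$1$1 * v$1 + A$1$2 * v$2) - A$1$2 * (A$2$1 * v$1 + A$2$2 * v$2)"
    by (simp add: algebra_simps)
  finally have "v$1 = 0" using e1 e2 by simp
  have "v$2 = (A$1$1 * A$2$2 - A$1$2 * A$2$1) * v$2" using d by simp
  also have "\<dots> = A$1$1 * (A$2$1 * v$1 + A$2$2 * v$2) - A$2$1 * (A$1$1 * v$1 + A$1$2 * v$2)"
    by (simp add: algebra_simps)
  finally have "v$2 = 0" using e1 e2 by simp
  with \<open>v$1 = 0\<close> show ?thesis by (simp add: vec2_eq)
qed

lemma sl_act_neg: "sl_act A (- v) = - sl_act A v"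
proof -
  have "A *v (- v) = - (A *v v)" by (simp add: vec2_eq mv1 mv2)
  then show ?thesis by (simp add: sl_act_def)
qed

lemma sl_act_inj:
  assumes "A \<in> SL2" "norm u = 1" "norm v = 1" "sl_act A u = sl_act A v"
  shows "u = v"
proof -
  have nu: "A *v u \<noteq> 0" using SL2_inj0[OF assms(1)] assms(2) by force
  have nv: "A *v v \<noteq> 0" using SL2_inj0[OF assms(1)] assms(3) by force
  define c where "c = norm (A *v u) / norm (A *v v)"
  have cpos: "c > 0" using nu nv by (simp add: c_def)
  have "A *v u = c *\<^sub>R (A *v v)"
    using assms(4) nu nv unfolding sl_act_def c_def
    by (metis (no_types, lifting) divide_inverse_commute mult.commute norm_eq_zero scaleR_right_imp_eq
        scaleR_scaleR divide_eq_0_iff inverse_eq_divide one_neq_zero eq_divide_eq scaleR_one nonzero_divide_eq_eq)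
  then have "A *v (u - c *\<^sub>R v) = 0"
    by (simp add: matrix_vector_mult_diff_distrib matrix_vector_mult_scaleR)
  then have "u = c *\<^sub>R v" using SL2_inj0[OF assms(1), of "u - c *\<^sub>R v"] by simp
  then have "norm u = c" using assms(3) cpos by simp
  then have "c = 1" using assms(2) by simp
  with \<open>u = c *\<^sub>R v\<close> show ?thesis by simp
qed

lemma sl_act_comp:
  assumes "B \<in> SL2" "v \<noteq> 0"
  shows "sl_act (A ** B) v = sl_act A (sl_act B v)"
proof -
  have nb: "norm (B *v v) > 0" using SL2_inj0[OF assms(1)] assms(2) by auto
  have "A *v sl_act B v = (1 / norm (B *v v)) *\<^sub>R ((A ** B) *v v)"
    by (simp add: sl_act_def matrix_vector_mult_scaleR matrix_vector_mul_assoc)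
  then show ?thesis using nb
    by (simp add: sl_act_def matrix_vector_mult_scaleR matrix_vector_mul_assoc)
qed

definition hyp :: "real \<Rightarrow> real \<Rightarrow> real" where
  "hyp \<mu> t = t + arctan ((1 - \<mu>) * sin t * cos t / (\<mu> * (cos t)\<^sup>2 + (sin t)\<^sup>2))"

lemma hyp_den_pos: fixes \<mu> t :: real shows "\<mu> > 0 \<Longrightarrow> \<mu> * (cos t)\<^sup>2 + (sin t)\<^sup>2 > 0"
proof -
  assume m: "\<mu> > 0"
  have cs: "(cos t)\<^sup>2 + (sin t)\<^sup>2 = 1" using sin_cos_squared_add[of t] by simp
  show ?thesis
  proof (cases "\<mu> \<le> 1")
    case True
    then have "\<mu> * (sin t)\<^sup>2 \<le> (sin t)\<^sup>2" using mult_right_mono[of \<mu> 1 "(sin t)\<^sup>2"] by simp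
    moreover have "\<mu> * (cos t)\<^sup>2 + \<mu> * (sin t)\<^sup>2 = \<mu>" using cs by (metis distrib_left mult_1_right)
    ultimately show ?thesis using m by linarith
  next
    case False
    then have "(cos t)\<^sup>2 \<le> \<mu> * (cos t)\<^sup>2" using mult_right_mono[of 1 \<mu> "(cos t)\<^sup>2"] by simp
    then show ?thesis using cs by linarith
  qed
qed

lemma hyp_N_pos: fixes \<mu> t :: real assumes "\<mu> > 0" shows "\<mu>\<^sup>2 * (cos t)\<^sup>2 + (sin t)\<^sup>2 > 0"
proof -
  have "\<mu>\<^sup>2 > 0" using assms by simp
  then show ?thesis by (rule hyp_den_pos)
qed

lemma hyp_cos_sin:
  assumes m: "\<mu> > 0"
  shows "cos (hyp \<mu> t) = \<mu> * cos t / sqrt (\<mu>\<^sup>2 * (cos t)\<^sup>2 + (sin t)\<^sup>2)"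
    and "sin (hyp \<mu> t) = sin t / sqrt (\<mu>\<^sup>2 * (cos t)\<^sup>2 + (sin t)\<^sup>2)"
proof -
  define c where "c = cos t"
  define s where "s = sin t"
  define D where "D = \<mu> * c\<^sup>2 + s\<^sup>2"
  define u where "u = (1 - \<mu>) * s * c / D"
  have cs: "c\<^sup>2 + s\<^sup>2 = 1" by (simp add: c_def s_def)
  have Dp: "D > 0" using hyp_den_pos[OF m] by (simp add: c_def s_def D_def)
  define N where "N = \<mu>\<^sup>2 * c\<^sup>2 + s\<^sup>2"
  have Np: "N > 0" using hyp_N_pos[OF m] by (simp add: c_def s_def N_def)
  have e1: "c - s * u = \<mu> * c / D"
  proof -
    have "c - s * u = (c * D - (1 - \<mu>) * s\<^sup>2 * c) / D" using Dp unfolding u_def by (simp add: field_simps power2_eq_square)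
    also have "c * D - (1 - \<mu>) * s\<^sup>2 * c = \<mu> * c * (c\<^sup>2 + s\<^sup>2)" by (simp add: D_def algebra_simps power2_eq_square)
    finally show ?thesis using cs by simp
  qed
  have e2: "s + c * u = s / D"
  proof -
    have "s + c * u = (s * D + (1 - \<mu>) * s * c\<^sup>2) / D" using Dp unfolding u_def by (simp add: field_simps power2_eq_square)
    also have "s * D + (1 - \<mu>) * s * c\<^sup>2 = s * (c\<^sup>2 + s\<^sup>2)" by (simp add: D_def algebra_simps power2_eq_square)
    finally show ?thesis using cs by simp
  qed
  have "(c - s * u)\<^sup>2 + (s + c * u)\<^sup>2 = (c\<^sup>2 + s\<^sup>2) * (1 + u\<^sup>2)"
    by (simp add: algebra_simps power2_eq_square)
  then have "1 + u\<^sup>2 = ((c - s * u)\<^sup>2 + (s + c * u)\<^sup>2)" using cs by simp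
  also have "\<dots> = N / D\<^sup>2" unfolding e1 e2 N_def using Dp by (simp add: field_simps power2_eq_square)
  finally have "sqrt (1 + u\<^sup>2) = sqrt N / D" using Dp by (simp add: real_sqrt_divide)
  moreover have "hyp \<mu> t = t + arctan u" by (simp add: hyp_def c_def s_def D_def u_def)
  ultimately have "cos (hyp \<mu> t) = (c - s * u) / (sqrt N / D)"
    and "sin (hyp \<mu> t) = (s + c * u) / (sqrt N / D)"
    by (simp_all add: cos_add sin_add cos_arctan sin_arctan c_def s_def algebra_simps add_divide_distrib diff_divide_distrib)
  then show "cos (hyp \<mu> t) = \<mu> * cos t / sqrt (\<mu>\<^sup>2 * (cos t)\<^sup>2 + (sin t)\<^sup>2)"
    and "sin (hyp \<mu> t) = sin t / sqrt (\<mu>\<^sup>2 * (cos t)\<^sup>2 + (sin t)\<^sup>2)"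
    unfolding e1 e2 using Dp by (simp_all add: N_def c_def s_def)
qed

lemma cs_eq_close:
  fixes x y :: real
  assumes "cos x = cos y" "sin x = sin y" "\<bar>x - y\<bar> < 2 * pi" shows "x = y"
proof -
  obtain n :: int where n: "x = y + 2 * pi * n" using sin_cos_eq_iff[of x y] assms by auto
  then have "\<bar>2 * pi * n\<bar> < 2 * pi" using assms(3) by simp
  then have "\<bar>real_of_int n\<bar> < 1" by (simp add: abs_mult)
  then have "n = 0" by linarith
  then show ?thesis using n by simp
qed

lemma hyp_close: "\<bar>hyp \<mu> t - t\<bar> < pi / 2"
proof -
  have "\<bar>arctan y\<bar> < pi / 2" for y using arctan_bounded[of y] unfolding abs_less_iff by linarith
  then show ?thesis by (simp add: hyp_def)
qed

lemma hyp_odd: "hyp \<mu> (- t) = - hyp \<mu> t"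
  by (simp add: hyp_def arctan_minus)

lemma hyp_inv:
  assumes m: "\<mu> > 0" shows "hyp (1 / \<mu>) (hyp \<mu> t) = t"
proof -
  define N where "N = sqrt (\<mu>\<^sup>2 * (cos t)\<^sup>2 + (sin t)\<^sup>2)"
  have Np: "N > 0" using hyp_N_pos[OF m, of t] by (simp add: N_def)
  have c1: "cos (hyp \<mu> t) = \<mu> * cos t / N" and s1: "sin (hyp \<mu> t) = sin t / N"
    using hyp_cos_sin[OF m, of t] by (simp_all add: N_def)
  have "(1 / \<mu>)\<^sup>2 * (cos (hyp \<mu> t))\<^sup>2 + (sin (hyp \<mu> t))\<^sup>2 = ((cos t)\<^sup>2 + (sin t)\<^sup>2) / N\<^sup>2"
    unfolding c1 s1 using m Np by (simp add: field_simps power2_eq_square)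
  then have e: "sqrt ((1 / \<mu>)\<^sup>2 * (cos (hyp \<mu> t))\<^sup>2 + (sin (hyp \<mu> t))\<^sup>2) = 1 / N"
    using Np by (simp add: real_sqrt_divide)
  have m': "1 / \<mu> > 0" using m by simp
  have "cos (hyp (1/\<mu>) (hyp \<mu> t)) = cos t"
    unfolding hyp_cos_sin(1)[OF m'] e unfolding c1 using m Np by simp
  moreover have "sin (hyp (1/\<mu>) (hyp \<mu> t)) = sin t"
    unfolding hyp_cos_sin(2)[OF m'] e unfolding s1 using m Np by simp
  moreover have "\<bar>hyp (1/\<mu>) (hyp \<mu> t) - t\<bar> < 2 * pi"
    using hyp_close[of "1/\<mu>" "hyp \<mu> t"] hyp_close[of \<mu> t] pi_gt_zero by linarith
  ultimately show ?thesis by (rule cs_eq_close)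
qed

lemma alg: "(d::real) \<noteq> 0 \<Longrightarrow> (a * b / d)\<^sup>2 + a\<^sup>2 = (a / d)\<^sup>2 * (b\<^sup>2 + d\<^sup>2)"
  by (simp add: field_simps power2_eq_square)

lemma hyp_hit:
  fixes t t' :: real
  assumes c: "cos t * cos t' > 0" and s: "sin t * sin t' > 0" and d: "\<bar>t - t'\<bar> < pi"
  shows "hyp (sin t * cos t' / (cos t * sin t')) t = t'"
proof -
  define \<mu> where "\<mu> = sin t * cos t' / (cos t * sin t')"
  have cnz: "cos t \<noteq> 0" "cos t' \<noteq> 0" "sin t \<noteq> 0" "sin t' \<noteq> 0" using c s by auto
  have "\<mu> = (sin t * sin t') * (cos t * cos t') / (cos t * sin t')\<^sup>2"
    using cnz by (simp add: \<mu>_def field_simps power2_eq_square)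
  then have m: "\<mu> > 0" using c s cnz by simp
  have q: "\<mu> * cos t = sin t * cos t' / sin t'" using cnz by (simp add: \<mu>_def)
  have cs': "(cos t')\<^sup>2 + (sin t')\<^sup>2 = 1" using sin_cos_squared_add[of t'] by simp
  have "\<mu>\<^sup>2 * (cos t)\<^sup>2 + (sin t)\<^sup>2 = (\<mu> * cos t)\<^sup>2 + (sin t)\<^sup>2"
    by (simp add: power_mult_distrib)
  also have "\<dots> = (sin t * cos t' / sin t')\<^sup>2 + (sin t)\<^sup>2" by (simp only: q)
  also have "\<dots> = (sin t / sin t')\<^sup>2 * ((cos t')\<^sup>2 + (sin t')\<^sup>2)"
    using alg[OF cnz(4)] .
  also have "\<dots> = (sin t / sin t')\<^sup>2" using cs' by simp
  finally have sq: "sqrt (\<mu>\<^sup>2 * (cos t)\<^sup>2 + (sin t)\<^sup>2) = sin t / sin t'"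
  proof -
    assume h: "\<mu>\<^sup>2 * (cos t)\<^sup>2 + (sin t)\<^sup>2 = (sin t / sin t')\<^sup>2"
    have p: "sin t / sin t' > 0" using s by (auto simp add: zero_less_divide_iff zero_less_mult_iff)
    show ?thesis unfolding h real_sqrt_abs using p by (simp only: abs_of_pos)
  qed
  have "cos (hyp \<mu> t) = cos t'"
    unfolding hyp_cos_sin(1)[OF m] sq q using cnz by simp
  moreover have "sin (hyp \<mu> t) = sin t'"
    unfolding hyp_cos_sin(2)[OF m] sq using cnz by simp
  moreover have "\<bar>hyp \<mu> t - t'\<bar> < 2 * pi" using hyp_close[of \<mu> t] pi_gt_zero d by linarith
  ultimately have "hyp \<mu> t = t'" by (rule cs_eq_close)
  then show ?thesis by (simp add: \<mu>_def)
qed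

lemma smooth_hyp: assumes m: "\<mu> > 0" shows "smooth_real (hyp \<mu>)"
proof -
  have eq: "hyp \<mu> = (\<lambda>t. t + arctan ((1 - \<mu>) * sin t * cos t * inverse (\<mu> * (cos t * cos t) + sin t * sin t)))"
    by (rule ext) (simp add: hyp_def divide_inverse power2_eq_square)
  have "Cn n (hyp \<mu>)" for n
  proof -
    have sc: "Cn n sin" "Cn n cos" using Cn_sin_cos by auto
    have nz: "\<mu> * (cos t * cos t) + sin t * sin t \<noteq> 0" for t
      using hyp_den_pos[OF m, of t] by (simp add: power2_eq_square)
    have d: "Cn n (\<lambda>t. \<mu> * (cos t * cos t) + sin t * sin t)"
      by (intro Cn_add Cn_mult Cn_const sc)
    have i: "Cn n (\<lambda>t. inverse (\<mu> * (cos t * cos t) + sin t * sin t))"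
      by (rule Cn_inverse[OF d nz])
    have u: "Cn n (\<lambda>t. (1 - \<mu>) * sin t * cos t * inverse (\<mu> * (cos t * cos t) + sin t * sin t))"
      by (intro Cn_mult Cn_const sc i)
    have a: "Cn n (\<lambda>t. arctan ((1 - \<mu>) * sin t * cos t * inverse (\<mu> * (cos t * cos t) + sin t * sin t)))"
      by (rule Cn_compose[OF u Cn_arctan])
    show ?thesis unfolding eq by (rule Cn_add[OF Cn_id a])
  qed
  then show ?thesis by (simp add: smooth_Cn)
qed

lemma hyp_inv2: "\<mu> > 0 \<Longrightarrow> hyp \<mu> (hyp (1 / \<mu>) t) = t"
  using hyp_inv[of "1/\<mu>" t] by simp

lemma hyp_diffeo: assumes m: "\<mu> > 0" shows "diffeo_real (hyp \<mu>)" and "inv (hyp \<mu>) = hyp (1 / \<mu>)"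
proof -
  have 1: "hyp \<mu> \<circ> hyp (1/\<mu>) = id" using hyp_inv2[OF m] by (simp add: fun_eq_iff)
  have 2: "hyp (1/\<mu>) \<circ> hyp \<mu> = id" using hyp_inv[OF m] by (simp add: fun_eq_iff)
  show iv: "inv (hyp \<mu>) = hyp (1 / \<mu>)" by (rule inv_unique_comp[OF 1 2])
  have "bij (hyp \<mu>)" by (rule o_bij[OF 2 1])
  moreover have "smooth_real (hyp (1/\<mu>))" using m by (intro smooth_hyp) simp
  ultimately show "diffeo_real (hyp \<mu>)" unfolding diffeo_real_def iv using smooth_hyp[OF m] by simp
qed

lemma sq_helper: "(x::real) > 0 \<Longrightarrow> x * c / (sqrt x * n) = sqrt x * c / n"
proof -
  assume x: "x > 0"
  have "x = sqrt x * sqrt x" using x by simp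
  then have "x * c / (sqrt x * n) = sqrt x * (sqrt x * c) / (sqrt x * n)" by (metis mult.assoc)
  also have "\<dots> = sqrt x * c / n" using x by simp
  finally show ?thesis .
qed

definition dm :: "real \<Rightarrow> real^2^2" where
  "dm \<mu> = vector [vector [sqrt \<mu>, 0], vector [0, 1 / sqrt \<mu>]]"

lemma dm_SL2: "\<mu> > 0 \<Longrightarrow> dm \<mu> \<in> SL2"
  by (simp add: SL2_def det_2 dm_def)

lemma hyp_lift: assumes m: "\<mu> > 0" shows "pibar (hyp \<mu> t) = sl_act (dm \<mu>) (pibar t)"
proof -
  define c s where "c = cos t" and "s = sin t"
  have r: "sqrt \<mu> > 0" using m by simp
  have e1: "(dm \<mu> *v pibar t)$1 = sqrt \<mu> * c" and e2: "(dm \<mu> *v pibar t)$2 = s / sqrt \<mu>"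
    by (simp_all add: mv1 mv2 dm_def c_def s_def)
  have "\<mu>\<^sup>2 * c\<^sup>2 + s\<^sup>2 = \<mu> * ((sqrt \<mu> * c)\<^sup>2 + (s / sqrt \<mu>)\<^sup>2)"
    using m r by (simp add: field_simps power2_eq_square)
  then have N: "sqrt (\<mu>\<^sup>2 * c\<^sup>2 + s\<^sup>2) = sqrt \<mu> * norm (dm \<mu> *v pibar t)"
    by (simp add: norm_vec2 e1 e2 real_sqrt_mult)
  have Np: "norm (dm \<mu> *v pibar t) > 0" using SL2_inj0[OF dm_SL2[OF m], of "pibar t"] norm_pibar[of t]
    by (metis norm_zero zero_neq_one zero_less_norm_iff)
  show ?thesis
    unfolding vec2_eq pibar1 pibar2 hyp_cos_sin[OF m] sl_act_def
    using N Np r m by (simp add: e1 e2 sq_helper flip: c_def s_def)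
qed

lemma hyp_SL2_tilde: "\<mu> > 0 \<Longrightarrow> hyp \<mu> \<in> SL2_tilde"
  unfolding SL2_tilde_def using hyp_diffeo dm_SL2 hyp_lift by (fastforce simp: fun_eq_iff)

definition rm :: "real \<Rightarrow> real^2^2" where
  "rm c = vector [vector [cos c, - sin c], vector [sin c, cos c]]"

lemma tr_SL2_tilde: "(\<lambda>t. t + c) \<in> SL2_tilde"
proof -
  have 1: "(\<lambda>t. t + c) \<circ> (\<lambda>t. t - c) = id" "(\<lambda>t. t - c) \<circ> (\<lambda>t. t + c) = id" by (auto simp: fun_eq_iff)
  have iv: "inv (\<lambda>t. t + c) = (\<lambda>t. t - c)" by (rule inv_unique_comp[OF 1])
  have b: "bij (\<lambda>t::real. t + c)" by (rule o_bij[OF 1(2) 1(1)])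
  have s1: "smooth_real (\<lambda>t. t + c)" "smooth_real (\<lambda>t. t - c)"
    using Cn_add[OF Cn_id Cn_const, of _ c] Cn_add[OF Cn_id Cn_const, of _ "-c"] by (simp_all add: smooth_Cn)
  have d: "rm c \<in> SL2" by (simp add: SL2_def det_2 rm_def power2_eq_square[symmetric])
  have "pibar (t + c) = sl_act (rm c) (pibar t)" for t
  proof -
    have "rm c *v pibar t = pibar (t + c)"
      by (simp add: vec2_eq mv1 mv2 rm_def cos_add sin_add algebra_simps)
    then show ?thesis by (simp add: sl_act_def)
  qed
  moreover have "smooth_real (inv (\<lambda>t. t + c))" using iv s1 by simp
  ultimately show ?thesis unfolding SL2_tilde_def diffeo_real_def using b s1 d by (auto simp: fun_eq_iff)
qed

lemma SL2_tilde_comp: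
  assumes "F \<in> SL2_tilde" "G \<in> SL2_tilde" shows "F \<circ> G \<in> SL2_tilde"
proof -
  obtain A where A: "A \<in> SL2" "pibar \<circ> F = sl_act A \<circ> pibar" and dF: "diffeo_real F"
    using assms(1) by (auto simp: SL2_tilde_def)
  obtain B where B: "B \<in> SL2" "pibar \<circ> G = sl_act B \<circ> pibar" and dG: "diffeo_real G"
    using assms(2) by (auto simp: SL2_tilde_def)
  have bF: "bij F" and bG: "bij G" using dF dG by (auto simp: diffeo_real_def)
  have iv: "inv (F \<circ> G) = inv G \<circ> inv F" by (rule o_inv_distrib[OF bF bG])
  have sm: "smooth_real (\<lambda>x. F (G x))" "smooth_real (\<lambda>x. inv G (inv F x))"
    using dF dG unfolding diffeo_real_def smooth_Cn by (auto intro: Cn_compose)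
  have "diffeo_real (F \<circ> G)" unfolding diffeo_real_def iv using sm bij_comp[OF bG bF]
    by (simp add: o_def)
  moreover have "A ** B \<in> SL2" using A B by (simp add: SL2_def det_mul)
  moreover have "pibar \<circ> (F \<circ> G) = sl_act (A ** B) \<circ> pibar"
  proof (rule ext)
    fix t
    have nz: "pibar t \<noteq> 0" using norm_pibar[of t] by (metis norm_zero zero_neq_one)
    have "pibar (F (G t)) = sl_act A (pibar (G t))" using A by (simp add: fun_eq_iff)
    also have "\<dots> = sl_act A (sl_act B (pibar t))" using B by (simp add: fun_eq_iff)
    also have "\<dots> = sl_act (A ** B) (pibar t)" using sl_act_comp[OF B(1) nz] by simp
    finally show "(pibar \<circ> (F \<circ> G)) t = (sl_act (A ** B) \<circ> pibar) t" by simp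
  qed
  ultimately show ?thesis unfolding SL2_tilde_def by blast
qed

lemma SL2_tilde_cont_inj:
  assumes "F \<in> SL2_tilde" shows "continuous_on S F" and "inj F"
proof -
  have "smooth_real F" and "bij F" using assms by (auto simp: SL2_tilde_def diffeo_real_def)
  then have "\<forall>x. F differentiable (at x)" unfolding smooth_Cn by (metis Cn_diff)
  then have "\<forall>x\<in>S. isCont F x" by (simp add: differentiable_imp_continuous_within)
  then show "continuous_on S F" by (rule continuous_at_imp_continuous_on)
  show "inj F" using \<open>bij F\<close> by (simp add: bij_is_inj)
qed

lemma int_gap:
  fixes n m :: int assumes "2 * pi * n \<noteq> 2 * pi * m" shows "2 * pi \<le> \<bar>2 * pi * n - 2 * pi * m\<bar>"
proof -
  have "n \<noteq> m" using assms by auto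
  then have "1 \<le> \<bar>n - m\<bar>" by arith
  then have "(1::real) \<le> of_int \<bar>n - m\<bar>" by (simp only: of_int_1_le_iff)
  then have "1 \<le> \<bar>real_of_int n - real_of_int m\<bar>" by simp
  then have "2 * pi * 1 \<le> 2 * pi * \<bar>real_of_int n - real_of_int m\<bar>" by (intro mult_left_mono) auto
  also have "\<dots> = \<bar>2 * pi * (real_of_int n - real_of_int m)\<bar>" by (simp add: abs_mult)
  also have "\<dots> = \<bar>2 * pi * n - 2 * pi * m\<bar>" by (simp only: right_diff_distrib)
  finally show ?thesis by simp
qed

lemma const_2pi:
  fixes g :: "real \<Rightarrow> real"
  assumes c: "continuous_on UNIV g" and v: "\<And>t. \<exists>n::int. g t = 2 * pi * n"
  shows "g t = g 0"
proof -
  have "g constant_on UNIV"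
  proof (rule continuous_discrete_range_constant[OF connected_UNIV c])
    fix x :: real
    show "\<exists>e>0. \<forall>y. y \<in> UNIV \<and> g y \<noteq> g x \<longrightarrow> e \<le> norm (g y - g x)"
    proof (intro exI[of _ "2*pi"] conjI allI impI)
      fix y assume "y \<in> UNIV \<and> g y \<noteq> g x"
      moreover obtain n m :: int where "g y = 2 * pi * n" "g x = 2 * pi * m" using v by metis
      ultimately show "2 * pi \<le> norm (g y - g x)" using int_gap[of n m] by simp
    qed simp
  qed
  then show ?thesis unfolding constant_on_def by auto
qed

lemma SL2_tilde_shift:
  assumes F: "F \<in> SL2_tilde"
  obtains d where "d = pi \<or> d = - pi" and "\<And>t. F (t + pi) = F t + d"
proof -
  obtain A where A: "A \<in> SL2" and lift: "\<And>t. pibar (F t) = sl_act A (pibar t)"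
    using F by (auto simp: SL2_tilde_def fun_eq_iff)
  have cont: "continuous_on S F" for S using SL2_tilde_cont_inj[OF F] by simp
  have s1: "\<exists>n::int. F (t + pi) - F t - pi = 2 * pi * n" for t
  proof -
    have "pibar (F (t + pi)) = sl_act A (- pibar t)" by (simp add: lift pibar_pi)
    also have "\<dots> = pibar (F t + pi)" by (simp add: sl_act_neg lift pibar_pi)
    finally obtain n :: int where "F (t + pi) = F t + pi + 2 * pi * n" using pibar_eq_iff by metis
    then show ?thesis by (intro exI[of _ n]) simp
  qed
  define g where "g t = F (t + pi) - F t - pi" for t
  have "continuous_on UNIV (\<lambda>t. F (t + pi))"
    using continuous_on_compose[of UNIV "\<lambda>t. t + pi" F] cont by (simp add: o_def continuous_intros)
  then have gc: "continuous_on UNIV g" unfolding g_def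
    using cont[of UNIV] by (intro continuous_intros)
  have gconst: "g t = g 0" for t by (rule const_2pi[OF gc]) (use s1 g_def in auto)
  obtain m :: int where m: "g 0 = 2 * pi * m" using s1 g_def by metis
  have nohit: False if s: "0 \<le> s" "s \<le> pi" and k: "F s = F 0 + 2 * pi * k" "k \<noteq> 0" for s :: real and k :: int
  proof -
    have "pibar (F s) = pibar (F 0)" unfolding pibar_eq_iff using k by (intro exI[of _ k]) simp
    then have "sl_act A (pibar s) = sl_act A (pibar 0)" by (simp only: lift)
    then have "pibar s = pibar 0" by (rule sl_act_inj[OF A norm_pibar norm_pibar])
    then obtain n :: int where n0: "s = 0 + 2 * pi * n" unfolding pibar_eq_iff by blast
    then have n: "s = 2 * pi * n" by simp
    have "pi * (2 * real_of_int n) \<le> pi * 1" using s n by simp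
    then have a: "2 * real_of_int n \<le> 1" using pi_gt_zero mult_le_cancel_left_pos by blast
    have "pi * 0 \<le> pi * (2 * real_of_int n)" using s n by simp
    then have b: "0 \<le> 2 * real_of_int n" using pi_gt_zero mult_le_cancel_left_pos by blast
    from a b have "n = 0" by linarith
    then show False using n k by simp
  qed
  have mF: "F pi - F 0 - pi = 2 * pi * m" using m by (simp add: g_def)
  have "m = 0 \<or> m = -1"
  proof (rule ccontr)
    assume "\<not> (m = 0 \<or> m = -1)"
    then have "m \<ge> 1 \<or> m \<le> -2" by linarith
    then show False
    proof
      assume "m \<ge> 1"
      then have "real_of_int m \<ge> 1" by simp
      then have "2 * pi * 1 \<le> 2 * pi * real_of_int m" by (intro mult_left_mono) auto
      then have "F pi \<ge> F 0 + 2 * pi" using mF pi_gt_zero by linarith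
      have "\<exists>x. 0 \<le> x \<and> x \<le> pi \<and> F x = F 0 + 2 * pi"
        by (rule IVT') (use \<open>F pi \<ge> F 0 + 2 * pi\<close> cont pi_gt_zero in simp_all)
      then obtain s where "0 \<le> s" "s \<le> pi" "F s = F 0 + 2 * pi * of_int 1" by auto
      moreover have "(1::int) \<noteq> 0" by simp
      ultimately show False using nohit[of s 1] by blast
    next
      assume "m \<le> -2"
      then have "real_of_int m \<le> -2" by simp
      then have "2 * pi * real_of_int m \<le> 2 * pi * (-2)" by (intro mult_left_mono) auto
      then have "F pi \<le> F 0 - 2 * pi" using mF pi_gt_zero by linarith
      have "\<exists>x. 0 \<le> x \<and> x \<le> pi \<and> F x = F 0 - 2 * pi"
        by (rule IVT2') (use \<open>F pi \<le> F 0 - 2 * pi\<close> cont pi_gt_zero in simp_all)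
      then obtain s where "0 \<le> s" "s \<le> pi" "F s = F 0 + 2 * pi * of_int (-1)" by auto
      moreover have "(-1::int) \<noteq> 0" by simp
      ultimately show False using nohit[of s "-1"] by blast
    qed
  qed
  then have "g 0 + pi = pi \<or> g 0 + pi = - pi" using m by auto
  moreover have "F (t + pi) = F t + (g 0 + pi)" for t using gconst[of t] by (simp add: g_def)
  ultimately show ?thesis by (rule that)
qed

lemma pi_mult_less: "x * pi < y * pi \<longleftrightarrow> x < (y::real)"
  using pi_gt_zero mult_less_cancel_right_pos by blast

lemma nat_between: "real k' < real k \<Longrightarrow> real k < real k' + 1 \<Longrightarrow> False"
proof -
  assume h1: "real k' < real k" and h2: "real k < real k' + 1"
  have "k' < k" using h1 by simp
  moreover have "k < k' + 1" using h2 by (metis of_nat_1 of_nat_add of_nat_less_iff)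
  ultimately show False by arith
qed

lemma nat_eq2: "real k' < real k + 1 \<Longrightarrow> real k < real k' + 1 \<Longrightarrow> k' = k"
proof -
  assume h1: "real k' < real k + 1" and h2: "real k < real k' + 1"
  have "k' < k + 1" using h1 by (metis of_nat_1 of_nat_add of_nat_less_iff)
  moreover have "k < k' + 1" using h2 by (metis of_nat_1 of_nat_add of_nat_less_iff)
  ultimately show "k' = k" by arith
qed

lemma winding_int:
  assumes "b = a + real k * pi" shows "winding a b = real k"
  unfolding winding_def
proof (rule the_equality)
  show "(\<exists>k'::nat. b = a + real k' * pi \<and> real k = real k') \<or>
        (\<exists>k'::nat. a + real k' * pi < b \<and> b < a + (real k' + 1) * pi \<and> real k = real k' + 1/2)"
    using assms by auto
next
  fix w
  assume "(\<exists>k'::nat. b = a + real k' * pi \<and> w = real k') \<or>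
        (\<exists>k'::nat. a + real k' * pi < b \<and> b < a + (real k' + 1) * pi \<and> w = real k' + 1/2)"
  then show "w = real k"
  proof
    assume "\<exists>k'::nat. b = a + real k' * pi \<and> w = real k'"
    then obtain k' :: nat where "b = a + real k' * pi" "w = real k'" by blast
    then have "real k' * pi = real k * pi" using assms by simp
    then show ?thesis using \<open>w = real k'\<close> pi_gt_zero by simp
  next
    assume "\<exists>k'::nat. a + real k' * pi < b \<and> b < a + (real k' + 1) * pi \<and> w = real k' + 1/2"
    then obtain k' :: nat where "real k' * pi < real k * pi" "real k * pi < (real k' + 1) * pi"
      using assms by auto
    then have "real k' < real k" "real k < real k' + 1" unfolding pi_mult_less by auto
    then show ?thesis using nat_between by blast
  qed
qed

lemma winding_half:
  assumes "a + real k * pi < b" "b < a + (real k + 1) * pi" shows "winding a b = real k + 1/2"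
  unfolding winding_def
proof (rule the_equality)
  show "(\<exists>k'::nat. b = a + real k' * pi \<and> real k + 1/2 = real k') \<or>
        (\<exists>k'::nat. a + real k' * pi < b \<and> b < a + (real k' + 1) * pi \<and> real k + 1/2 = real k' + 1/2)"
    using assms by auto
next
  fix w
  assume "(\<exists>k'::nat. b = a + real k' * pi \<and> w = real k') \<or>
        (\<exists>k'::nat. a + real k' * pi < b \<and> b < a + (real k' + 1) * pi \<and> w = real k' + 1/2)"
  then show "w = real k + 1/2"
  proof
    assume "\<exists>k'::nat. b = a + real k' * pi \<and> w = real k'"
    then obtain k' :: nat where "b = a + real k' * pi" by blast
    then have "real k * pi < real k' * pi" "real k' * pi < (real k + 1) * pi" using assms by auto
    then have "real k < real k'" "real k' < real k + 1" unfolding pi_mult_less by auto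
    then show ?thesis using nat_between by blast
  next
    assume "\<exists>k'::nat. a + real k' * pi < b \<and> b < a + (real k' + 1) * pi \<and> w = real k' + 1/2"
    then obtain k' :: nat where h: "a + real k' * pi < b" "b < a + (real k' + 1) * pi"
      "w = real k' + 1/2" by blast
    have "real k' * pi < (real k + 1) * pi" "real k * pi < (real k' + 1) * pi"
      using h assms by linarith+
    then have "real k' < real k + 1" "real k < real k' + 1" unfolding pi_mult_less by auto
    then have "k' = k" by (rule nat_eq2)
    then show ?thesis using h by simp
  qed
qed

lemma winding_cases:
  assumes "a < (b::real)"
  obtains (int) k :: nat where "b = a + real k * pi"
    | (half) k :: nat where "a + real k * pi < b" "b < a + (real k + 1) * pi"
proof -
  define x where "x = (b - a) / pi"
  have xp: "x > 0" using assms pi_gt_zero by (simp add: x_def)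
  define k where "k = nat \<lfloor>x\<rfloor>"
  have k1: "real k \<le> x" "x < real k + 1" using xp by (simp_all add: k_def)
  have bx: "b = a + x * pi" using pi_gt_zero by (simp add: x_def)
  show ?thesis
  proof (cases "x = real k")
    case True then have "b = a + real k * pi" using bx by simp
    then show ?thesis by (rule int)
  next
    case False
    then have "real k * pi < x * pi" "x * pi < (real k + 1) * pi" using k1 unfolding pi_mult_less by auto
    then have "a + real k * pi < b" "b < a + (real k + 1) * pi" using bx by linarith+
    then show ?thesis by (rule half)
  qed
qed

lemma tr_img: "(\<lambda>t. t + c) ` {x<..<y} = {x + c<..<y + (c::real)}"
proof
  show "(\<lambda>t. t + c) ` {x<..<y} \<subseteq> {x + c<..<y + c}" by auto
  show "{x + c<..<y + c} \<subseteq> (\<lambda>t. t + c) ` {x<..<y}"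
  proof
    fix z assume "z \<in> {x + c<..<y + c}"
    then have "z - c \<in> {x<..<y}" by auto
    then show "z \<in> (\<lambda>t. t + c) ` {x<..<y}" by (rule rev_image_eqI) simp
  qed
qed

lemma ivl_eq: "{x<..<y} = {x'<..<y'} \<Longrightarrow> x' < y' \<Longrightarrow> x = x' \<and> y = (y'::real)"
proof -
  assume e: "{x<..<y} = {x'<..<y'}" and l: "x' < y'"
  have "(x' + y') / 2 \<in> {x'<..<y'}" using l by simp
  then have "(x' + y') / 2 \<in> {x<..<y}" using e by simp
  then have "x < y" by simp
  have "x = Inf {x<..<y}" using \<open>x < y\<close> by simp
  also have "\<dots> = x'" using e l by simp
  finally have 1: "x = x'" .
  have "y = Sup {x<..<y}" using \<open>x < y\<close> by simp
  also have "\<dots> = y'" using e l by simp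
  finally show ?thesis using 1 by simp
qed

lemma inj_img:
  fixes F :: "real \<Rightarrow> real"
  assumes "continuous_on UNIV F" "inj F" "x < y"
  shows "F ` {x<..<y} = open_segment (F x) (F y)"
proof -
  have "F ` open_segment x y = open_segment (F x) (F y)"
    by (rule continuous_injective_image_open_segment_1)
       (use assms in \<open>auto intro: continuous_on_subset inj_on_subset\<close>)
  then show ?thesis using assms(3) by (simp add: open_segment_eq_real_ivl)
qed

lemma fwd:
  assumes F: "F \<in> SL2_tilde" and ab: "a < b" and ab': "a' < b'" and img: "F ` {a<..<b} = {a'<..<b'}"
  shows "winding a b = winding a' b'"
proof -
  have cont: "continuous_on UNIV F" and inj: "inj F" using SL2_tilde_cont_inj[OF F] by auto
  obtain d where d: "d = pi \<or> d = - pi" and sh: "\<And>t. F (t + pi) = F t + d"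
    using SL2_tilde_shift[OF F] by metis
  have shk: "F (t + real k * pi) = F t + real k * d" for t k
  proof (induction k)
    case 0 then show ?case by simp
  next
    case (Suc k)
    have "F (t + real (Suc k) * pi) = F ((t + real k * pi) + pi)" by (simp add: algebra_simps)
    also have "\<dots> = F t + real k * d + d" using sh Suc by simp
    finally show ?case by (simp add: algebra_simps)
  qed
  have seg: "F ` {x<..<y} = open_segment (F x) (F y)" if "x < y" for x y
    by (rule inj_img[OF cont inj that])
  have len: "b' - a' = \<bar>F b - F a\<bar>"
  proof (cases "F a \<le> F b")
    case True
    then have "{F a<..<F b} = {a'<..<b'}" using seg[OF ab] img by (simp add: open_segment_eq_real_ivl)
    from ivl_eq[OF this ab'] have "F a = a'" "F b = b'" by auto
    then show ?thesis using True by simp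
  next
    case False
    then have "{F b<..<F a} = {a'<..<b'}" using seg[OF ab] img by (simp add: open_segment_eq_real_ivl)
    from ivl_eq[OF this ab'] have "F b = a'" "F a = b'" by auto
    then show ?thesis using False by simp
  qed
  from ab show ?thesis
  proof (cases rule: winding_cases)
    case (int k)
    then have "F b = F a + real k * d" using shk by simp
    then have "\<bar>F b - F a\<bar> = real k * pi" using d by auto
    then have "b' = a' + real k * pi" using len by simp
    then show ?thesis using winding_int int by simp
  next
    case (half k)
    have "b \<in> {a + real k * pi<..<a + real (Suc k) * pi}"
      unfolding greaterThanLessThan_iff of_nat_Suc using half by (simp add: distrib_right)
    moreover have "a + real k * pi < a + real (Suc k) * pi" using pi_gt_zero by simp
    ultimately have "F b \<in> open_segment (F a + real k * d) (F a + real (Suc k) * d)"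
      using seg by (metis shk image_eqI)
    then have "F b \<in> open_segment (F a + real k * d) (F a + (real k + 1) * d)"
      by (simp only: of_nat_Suc add.commute[of 1 "real k"])
    note os = this
    have kp: "real k * pi \<ge> 0" by simp
    have "real k * pi < \<bar>F b - F a\<bar> \<and> \<bar>F b - F a\<bar> < (real k + 1) * pi"
      using d
    proof
      assume dp: "d = pi"
      have le: "F a + real k * pi \<le> F a + (real k + 1) * pi" using pi_gt_zero by (simp add: distrib_right)
      have "F a + real k * pi < F b \<and> F b < F a + (real k + 1) * pi"
        using os le unfolding dp by (simp add: open_segment_eq_real_ivl)
      then have "F a + real k * pi < F b" "F b < F a + real k * pi + pi" by (simp_all add: distrib_right)
      moreover have "F b - F a > 0" using calculation kp by linarith
      then have "\<bar>F b - F a\<bar> = F b - F a" by simp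
      ultimately show ?thesis by (simp add: distrib_right)
    next
      assume dm: "d = - pi"
      have "F a + (real k + 1) * (- pi) < F a + real k * (- pi)" using pi_gt_zero by (simp add: distrib_right)
      then have le: "\<not> F a + real k * (- pi) \<le> F a + (real k + 1) * (- pi)" by (simp only: not_le)
      have "F a + (real k + 1) * (- pi) < F b \<and> F b < F a + real k * (- pi)"
        using os le unfolding dm by (simp add: open_segment_eq_real_ivl)
      then have "F a - real k * pi - pi < F b" "F b < F a - real k * pi" by (simp_all add: distrib_right)
      moreover have "F b - F a < 0" using calculation kp by linarith
      then have "\<bar>F b - F a\<bar> = F a - F b" by simp
      ultimately show ?thesis by (simp add: distrib_right)
    qed
    then have "a' + real k * pi < b'" "b' < a' + (real k + 1) * pi" using len by linarith+
    then show ?thesis using winding_half half by simp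
  qed
qed

lemma half_ne_int: "real k \<noteq> real k' + 1/2"
proof
  assume "real k = real k' + 1/2"
  then have "real (2 * k) = real (2 * k' + 1)" by simp
  then have "2 * k = 2 * k' + 1" by (simp only: of_nat_eq_iff)
  then show False by presburger
qed

lemma cs_shift: "cos (z + real j * pi) = (-1)^j * cos z" "sin (z + real j * pi) = (-1)^j * sin z"
  by (simp_all add: cos_add sin_add)

lemma neg1_sq: "((-1::real)^j) * ((-1)^j) = 1"
  by (simp flip: power_add)

lemma quad:
  fixes L L' :: real
  assumes "real k * pi < L" "L < (real k + 1) * pi" "real k * pi < L'" "L' < (real k + 1) * pi"
  shows "cos (L/2) * cos (L'/2) > 0" "sin (L/2) * sin (L'/2) > 0"
proof -
  have "k = 2 * (k div 2) \<or> k = 2 * (k div 2) + 1" by presburger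
  then obtain j where j: "k = 2 * j \<or> k = 2 * j + 1" by blast
  define z z' where "z = L/2 - real j * pi" and "z' = L'/2 - real j * pi"
  have Lz: "L/2 = z + real j * pi" "L'/2 = z' + real j * pi" by (simp_all add: z_def z'_def)
  have cc: "cos (L/2) * cos (L'/2) = cos z * cos z'" unfolding Lz cs_shift
    using neg1_sq[of j] by (simp add: algebra_simps)
  have ss: "sin (L/2) * sin (L'/2) = sin z * sin z'" unfolding Lz cs_shift
    using neg1_sq[of j] by (simp add: algebra_simps)
  from j have "cos z * cos z' > 0 \<and> sin z * sin z' > 0"
  proof
    assume k: "k = 2 * j"
    then have "0 < z" "z < pi/2" "0 < z'" "z' < pi/2" using assms by (simp_all add: z_def z'_def algebra_simps)
    then show ?thesis using cos_gt_zero sin_gt_zero2 by (simp add: mult_pos_pos)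
  next
    assume k: "k = 2 * j + 1"
    then have "pi/2 < z" "z < pi" "pi/2 < z'" "z' < pi" using assms by (simp_all add: z_def z'_def algebra_simps)
    moreover have "cos z < 0" if "pi/2 < z" "z < pi" for z
      using cos_gt_zero_pi[of "z - pi"] that by simp
    ultimately show ?thesis using sin_gt_zero by (simp add: mult_neg_neg mult_pos_pos)
  qed
  then show "cos (L/2) * cos (L'/2) > 0" "sin (L/2) * sin (L'/2) > 0" using cc ss by simp_all
qed

lemma mu_pos:
  fixes t t' :: real
  assumes c: "cos t * cos t' > 0" and s: "sin t * sin t' > 0"
  shows "sin t * cos t' / (cos t * sin t') > 0"
proof -
  have cnz1: "cos t \<noteq> 0"
  proof assume "cos t = 0" then have "cos t * cos t' = 0" by simp then show False using c by linarith qed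
  have cnz2: "sin t' \<noteq> 0"
  proof assume "sin t' = 0" then have "sin t * sin t' = 0" by simp then show False using s by linarith qed
  note cnz = cnz1 cnz2
  have "sin t * cos t' / (cos t * sin t') = (sin t * sin t') * (cos t * cos t') / (cos t * sin t')\<^sup>2"
    using cnz by (simp add: field_simps power2_eq_square)
  then show ?thesis using c s cnz by simp
qed

lemma bwd_half:
  assumes h: "a + real k * pi < b" "b < a + (real k + 1) * pi"
    "a' + real k * pi < b'" "b' < a' + (real k + 1) * pi"
  shows "\<exists>F\<in>SL2_tilde. F ` {a<..<b} = {a'<..<b'}"
proof -
  define t t' where "t = (b - a) / 2" and "t' = (b' - a') / 2"
  have q: "cos t * cos t' > 0" "sin t * sin t' > 0"
    using quad[of k "b - a" "b' - a'"] h by (simp_all add: t_def t'_def)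
  have h': "real k * pi < b - a" "b - a < real k * pi + pi" "real k * pi < b' - a'" "b' - a' < real k * pi + pi"
    using h by (simp_all add: distrib_right)
  have kp: "real k * pi \<ge> 0" by simp
  have "b - a > 0" "b' - a' > 0" using h' kp by linarith+
  then have tp: "t > 0" "t' > 0" by (simp_all add: t_def t'_def)
  define X where "X = (b - a) - (b' - a')"
  have X: "- pi < X" "X < pi" using h' unfolding X_def by linarith+
  have tt: "t - t' = X / 2" by (simp add: t_def t'_def X_def field_simps)
  have "- pi < X / 2" "X / 2 < pi" using X pi_gt_zero by linarith+
  then have "\<bar>t - t'\<bar> < pi" unfolding abs_less_iff tt by simp
  define \<mu> where "\<mu> = sin t * cos t' / (cos t * sin t')"
  have m: "\<mu> > 0" using mu_pos[OF q] by (simp add: \<mu>_def)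
  have H1: "hyp \<mu> t = t'" unfolding \<mu>_def by (rule hyp_hit[OF q \<open>\<bar>t - t'\<bar> < pi\<close>])
  have H2: "hyp \<mu> (- t) = - t'" using H1 hyp_odd by simp
  define c1 c2 where "c1 = - (a + b) / 2" and "c2 = (a' + b') / 2"
  define F where "F = (\<lambda>s. s + c2) \<circ> hyp \<mu> \<circ> (\<lambda>s. s + c1)"
  have FS: "F \<in> SL2_tilde" unfolding F_def
    by (intro SL2_tilde_comp tr_SL2_tilde hyp_SL2_tilde m)
  have hc: "continuous_on UNIV (hyp \<mu>)" "inj (hyp \<mu>)" using SL2_tilde_cont_inj[OF hyp_SL2_tilde[OF m]] by auto
  have "a + c1 = -t" "b + c1 = t" by (simp_all add: c1_def t_def field_simps)
  then have "(\<lambda>s. s + c1) ` {a<..<b} = {-t<..<t}" unfolding tr_img by simp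
  moreover have "hyp \<mu> ` {-t<..<t} = {-t'<..<t'}"
    using inj_img[OF hc, of "-t" t] tp H1 H2 by (simp add: open_segment_eq_real_ivl)
  moreover have "(\<lambda>s. s + c2) ` {-t'<..<t'} = {a'<..<b'}" unfolding tr_img by (simp add: c2_def t'_def field_simps)
  moreover have "F ` {a<..<b} = (\<lambda>s. s + c2) ` (hyp \<mu> ` ((\<lambda>s. s + c1) ` {a<..<b}))"
    unfolding F_def by (simp only: image_comp[symmetric])
  ultimately have "F ` {a<..<b} = {a'<..<b'}" by simp
  with FS show ?thesis by blast
qed

theorem mainTheorem6:
  fixes a b a' b' :: real
  assumes "a < b" and "a' < b'"
  shows "(\<exists>F\<in>SL2_tilde. F ` {a<..<b} = {a'<..<b'}) \<longleftrightarrow> winding a b = winding a' b'"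
proof
  assume "\<exists>F\<in>SL2_tilde. F ` {a<..<b} = {a'<..<b'}"
  then show "winding a b = winding a' b'" using fwd assms by blast
next
  assume w: "winding a b = winding a' b'"
  from assms(1) show "\<exists>F\<in>SL2_tilde. F ` {a<..<b} = {a'<..<b'}"
  proof (cases rule: winding_cases)
    case (int k)
    from assms(2) show ?thesis
    proof (cases rule: winding_cases)
      case (int k')
      then have "real k = real k'" using w winding_int \<open>b = a + real k * pi\<close> by simp
      then have "b' = b + (a' - a)" using int \<open>b = a + real k * pi\<close> by simp
      then have "(\<lambda>t. t + (a' - a)) ` {a<..<b} = {a'<..<b'}" unfolding tr_img by simp
      then show ?thesis using tr_SL2_tilde by blast
    next
      case (half k')
      then have "real k = real k' + 1/2" using w winding_int winding_half \<open>b = a + real k * pi\<close> by simp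
      then show ?thesis using half_ne_int by blast
    qed
  next
    case (half k)
    from assms(2) show ?thesis
    proof (cases rule: winding_cases)
      case (int k')
      then have "real k' = real k + 1/2" using w winding_int winding_half half by simp
      then show ?thesis using half_ne_int by blast
    next
      case h2: (half k')
      then have "real k + 1/2 = real k' + 1/2" using w winding_half half by simp
      then have "k = k'" by simp
      then show ?thesis using bwd_half half h2 by blast
    qed
  qed
qed

end
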